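(* There is a geodesic coarse median space $(X,d,\mu)$ of rank $2$ such that for every $C\geqslant0$ there exist $a,b\in X$ with the property that no geodesic connecting $a$ and $b$ lies within Hausdorff distance $C$ of the interval $[a,b]$.
   Context: Write $x\sim_s y$ if $d(x,y)\leqslant s$. A coarse median space is a triple $(X,d,\mu)$ with $(X,d)$ a metric space and $\mu\colon X^3\to X$ satisfying: (M1) $\mu(a,a,b)=a$; (M2) $\mu(a_1,a_2,a_3)$ is invariant under permutations of its arguments; (C1) there is an affine $\rho(t)=Kt+H_0$ with $d(\mu(a,b,c),\mu(a',b',c'))\leqslant\rho(d(a,a')+d(b,b')+d(c,c'))$ for all points; (C2) there is $H\colon\mathbb N\to[0,\infty)$ such that for every finite $A\subseteq X$ with $1\leqslant|A|\leqslant p$ there are a finite median algebra $(\Pi,\mu_\Pi)$ and maps $\pi\colon A\to\Pi$, $\lambda\colon\Pi\to X$ with $\lambda\mu_\Pi(x,y,z)\sim_{H(p)}\mu(\lambda x,\lambda y,\lambda z)$ for all $x,y,z\in\Pi$ and $\lambda\pi a\sim_{H(p)}a$ for all $a\in A$. (A median algebra is a set with a ternary operation $m$ satisfying $m(a,a,b)=a$, full symmetry, and $m(m(a,b,c),b,d)=m(a,b,m(c,b,d))$.) The rank of a median algebra is the supremum of $k$ such that it contains a subalgebra isomorphic to $I^k=(\mathbb Z_2)^k$ with coordinatewise majority vote as median. The coarse median space has rank at most $n$ if there exist $\rho,H$ as in (C1),(C2) for which $\Pi$ in (C2) can always be chosen of rank at most $n$; its rank is the least such $n$. The interval is $[a,b]=\{\mu(a,y,b):y\in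 X\}$. *)

theory Defs
  imports Complex_Main
begin

definition metric_on :: "'a set \<Rightarrow> ('a \<Rightarrow> 'a \<Rightarrow> real) \<Rightarrow> bool" where
  "metric_on X d \<longleftrightarrow>
     (\<forall>x\<in>X. \<forall>y\<in>X. 0 \<le> d x y \<and> (d x y = 0 \<longleftrightarrow> x = y) \<and> d x y = d y x) \<and>
     (\<forall>x\<in>X. \<forall>y\<in>X. \<forall>z\<in>X. d x z \<le> d x y + d y z)"

definition geodesic_path :: "'a set \<Rightarrow> ('a \<Rightarrow> 'a \<Rightarrow> real) \<Rightarrow> (real \<Rightarrow> 'a) \<Rightarrow> 'a \<Rightarrow> 'a \<Rightarrow> bool" where
  "geodesic_path X d \<gamma> a b \<longleftrightarrow>
     \<gamma> 0 = a \<and> \<gamma> (d a b) = b \<and> \<gamma> ` {0..d a b} \<subseteq> X \<and>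
     (\<forall>s\<in>{0..d a b}. \<forall>t\<in>{0..d a b}. d (\<gamma> s) (\<gamma> t) = \<bar>s - t\<bar>)"

definition geodesic_space :: "'a set \<Rightarrow> ('a \<Rightarrow> 'a \<Rightarrow> real) \<Rightarrow> bool" where
  "geodesic_space X d \<longleftrightarrow> metric_on X d \<and>
     (\<forall>a\<in>X. \<forall>b\<in>X. \<exists>\<gamma>. geodesic_path X d \<gamma> a b)"

text \<open>Hausdorff distance between S and T is at most C
  (i.e. the infimum-based Hausdorff distance is \<le> C).\<close>
definition hausdorff_le :: "('a \<Rightarrow> 'a \<Rightarrow> real) \<Rightarrow> 'a set \<Rightarrow> 'a set \<Rightarrow> real \<Rightarrow> bool" where
  "hausdorff_le d S T C \<longleftrightarrow>
     (\<forall>s\<in>S. \<forall>\<epsilon>>0. \<exists>t\<in>T. d s t < C + \<epsilon>) \<and>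
     (\<forall>t\<in>T. \<forall>\<epsilon>>0. \<exists>s\<in>S. d s t < C + \<epsilon>)"

definition median_algebra :: "'b set \<Rightarrow> ('b \<Rightarrow> 'b \<Rightarrow> 'b \<Rightarrow> 'b) \<Rightarrow> bool" where
  "median_algebra P m \<longleftrightarrow>
     (\<forall>a\<in>P. \<forall>b\<in>P. \<forall>c\<in>P. m a b c \<in> P) \<and>
     (\<forall>a\<in>P. \<forall>b\<in>P. m a a b = a) \<and>
     (\<forall>a\<in>P. \<forall>b\<in>P. \<forall>c\<in>P. m a b c = m b a c \<and> m a b c = m a c b) \<and>
     (\<forall>a\<in>P. \<forall>b\<in>P. \<forall>c\<in>P. \<forall>e\<in>P. m (m a b c) b e = m a b (m c b e))"

text \<open>The median cube I^k: Boolean functions on {0..<k} (extensional),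
  with coordinatewise majority vote.\<close>
definition cube :: "nat \<Rightarrow> (nat \<Rightarrow> bool) set" where
  "cube k = {f. \<forall>i. i \<ge> k \<longrightarrow> f i = False}"

definition majority :: "(nat \<Rightarrow> bool) \<Rightarrow> (nat \<Rightarrow> bool) \<Rightarrow> (nat \<Rightarrow> bool) \<Rightarrow> (nat \<Rightarrow> bool)" where
  "majority x y z = (\<lambda>i. (x i \<and> y i) \<or> (y i \<and> z i) \<or> (x i \<and> z i))"

definition contains_cube :: "'b set \<Rightarrow> ('b \<Rightarrow> 'b \<Rightarrow> 'b \<Rightarrow> 'b) \<Rightarrow> nat \<Rightarrow> bool" where
  "contains_cube P m k \<longleftrightarrow>
     (\<exists>f. inj_on f (cube k) \<and> f ` cube k \<subseteq> P \<and>
        (\<forall>x\<in>cube k. \<forall>y\<in>cube k. \<forall>z\<in>cube k. f (majority x y z) = m (f x) (f y) (f z)))"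

definition median_rank_le :: "'b set \<Rightarrow> ('b \<Rightarrow> 'b \<Rightarrow> 'b \<Rightarrow> 'b) \<Rightarrow> nat \<Rightarrow> bool" where
  "median_rank_le P m n \<longleftrightarrow> (\<forall>k. contains_cube P m k \<longrightarrow> k \<le> n)"

text \<open>Coarse median space of rank at most n. Finite median algebras are
  taken on carriers in nat (every finite median algebra is isomorphic to one).\<close>
definition coarse_median_rank_le ::
  "'a set \<Rightarrow> ('a \<Rightarrow> 'a \<Rightarrow> real) \<Rightarrow> ('a \<Rightarrow> 'a \<Rightarrow> 'a \<Rightarrow> 'a) \<Rightarrow> nat \<Rightarrow> bool" where
  "coarse_median_rank_le X d \<mu> n \<longleftrightarrow>
     metric_on X d \<and>
     (\<forall>a\<in>X. \<forall>b\<in>X. \<forall>c\<in>X. \<mu> a b c \<in> X) \<and>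
     (\<forall>a\<in>X. \<forall>b\<in>X. \<mu> a a b = a) \<and>
     (\<forall>a\<in>X. \<forall>b\<in>X. \<forall>c\<in>X. \<mu> a b c = \<mu> b a c \<and> \<mu> a b c = \<mu> a c b) \<and>
     (\<exists>K H0 :: real. \<exists>H :: nat \<Rightarrow> real.
        (\<forall>p. 0 \<le> H p) \<and>
        (\<forall>a\<in>X. \<forall>b\<in>X. \<forall>c\<in>X. \<forall>a'\<in>X. \<forall>b'\<in>X. \<forall>c'\<in>X.
           d (\<mu> a b c) (\<mu> a' b' c') \<le> K * (d a a' + d b b' + d c c') + H0) \<and>
        (\<forall>p. \<forall>A. A \<subseteq> X \<and> finite A \<and> 1 \<le> card A \<and> card A \<le> p \<longrightarrow>
           (\<exists>(P :: nat set) mP \<pi> lam.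
              finite P \<and> median_algebra P mP \<and> median_rank_le P mP n \<and>
              \<pi> ` A \<subseteq> P \<and> lam ` P \<subseteq> X \<and>
              (\<forall>x\<in>P. \<forall>y\<in>P. \<forall>z\<in>P. d (lam (mP x y z)) (\<mu> (lam x) (lam y) (lam z)) \<le> H p) \<and>
              (\<forall>a\<in>A. d (lam (\<pi> a)) a \<le> H p))))"

definition coarse_median_rank_eq ::
  "'a set \<Rightarrow> ('a \<Rightarrow> 'a \<Rightarrow> real) \<Rightarrow> ('a \<Rightarrow> 'a \<Rightarrow> 'a \<Rightarrow> 'a) \<Rightarrow> nat \<Rightarrow> bool" where
  "coarse_median_rank_eq X d \<mu> n \<longleftrightarrow>
     coarse_median_rank_le X d \<mu> n \<and> (\<forall>k<n. \<not> coarse_median_rank_le X d \<mu> k)"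

definition median_interval :: "'a set \<Rightarrow> ('a \<Rightarrow> 'a \<Rightarrow> 'a \<Rightarrow> 'a) \<Rightarrow> 'a \<Rightarrow> 'a \<Rightarrow> 'a set" where
  "median_interval X \<mu> a b = {\<mu> a y b | y. y \<in> X}"

end

theory Submission
  imports Defs
begin


definition med :: "real \<Rightarrow> real \<Rightarrow> real \<Rightarrow> real" where
  "med x y z = max (min x y) (min (max x y) z)"

definition dinf :: "real \<times> real \<Rightarrow> real \<times> real \<Rightarrow> real" where
  "dinf p q = max \<bar>fst p - fst q\<bar> \<bar>snd p - snd q\<bar>"

definition mu :: "real \<times> real \<Rightarrow> real \<times> real \<Rightarrow> real \<times> real \<Rightarrow> real \<times> real" where
  "mu p q r = (med (fst p) (fst q) (fst r), med (snd p) (snd q) (snd r))"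

lemma med_aab: "med a a b = a" unfolding med_def by (simp add: min_def max_def)
lemma med_sym1: "med a b c = med b a c" unfolding med_def by (simp add: min_def max_def)
lemma med_sym2: "med a b c = med a c b" unfolding med_def by (simp add: min_def max_def)
lemma med_assoc: "med (med a b c) b e = med a b (med c b e)"
  unfolding med_def min_def max_def by (smt (verit))
lemma med_in: "med a b c = a \<or> med a b c = b \<or> med a b c = c"
  unfolding med_def min_def max_def by (smt (verit))
lemma med_lip: "\<bar>med a b c - med a' b' c'\<bar> \<le> \<bar>a - a'\<bar> + \<bar>b - b'\<bar> + \<bar>c - c'\<bar>"
  unfolding med_def min_def max_def by (smt (verit))
lemma med_two: "a = med p a q \<Longrightarrow> b = med p b q \<Longrightarrow> p = med a b p \<Longrightarrow> q = med a b q \<Longrightarrow> a = p \<or> a = q"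
  unfolding med_def min_def max_def by (smt (verit))

lemma dinf_sym: "dinf p q = dinf q p" unfolding dinf_def by (simp add: abs_minus_commute)
lemma dinf_tri: "dinf p r \<le> dinf p q + dinf q r" unfolding dinf_def by (smt (verit))
lemma dinf_nn: "0 \<le> dinf p q" unfolding dinf_def by simp
lemma dinf_0: "dinf p q = 0 \<longleftrightarrow> p = q" unfolding dinf_def by (cases p; cases q; auto simp: max_def split: if_splits)

lemma metric_dinf: "metric_on UNIV dinf"
  unfolding metric_on_def using dinf_sym dinf_tri dinf_nn dinf_0 by blast

lemma mu_lip: "dinf (mu a b c) (mu a' b' c') \<le> dinf a a' + dinf b b' + dinf c c'"
proof -
  have 1: "\<bar>fst (mu a b c) - fst (mu a' b' c')\<bar> \<le> dinf a a' + dinf b b' + dinf c c'"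
    using med_lip[of "fst a" "fst b" "fst c" "fst a'" "fst b'" "fst c'"]
    unfolding mu_def dinf_def by (simp, smt (verit, best) max.cobounded1 max.cobounded2)
  have 2: "\<bar>snd (mu a b c) - snd (mu a' b' c')\<bar> \<le> dinf a a' + dinf b b' + dinf c c'"
    using med_lip[of "snd a" "snd b" "snd c" "snd a'" "snd b'" "snd c'"]
    unfolding mu_def dinf_def by (simp, smt (verit, best) max.cobounded1 max.cobounded2)
  show ?thesis using 1 2 unfolding dinf_def[of "mu a b c"] by simp
qed

lemma mu_aab: "mu a a b = a" unfolding mu_def by (simp add: med_aab)
lemma mu_sym1: "mu a b c = mu b a c" unfolding mu_def by (metis med_sym1)
lemma mu_sym2: "mu a b c = mu a c b" unfolding mu_def by (metis med_sym2)
lemma mu_assoc: "mu (mu a b c) b e = mu a b (mu c b e)" unfolding mu_def by (simp add: med_assoc)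

definition seg :: "real \<times> real \<Rightarrow> real \<times> real \<Rightarrow> real \<Rightarrow> real \<times> real" where
  "seg a b t = (if dinf a b = 0 then a else
     (fst a + t / dinf a b * (fst b - fst a), snd a + t / dinf a b * (snd b - snd a)))"

lemma seg_geo: "geodesic_path UNIV dinf (seg a b) a b"
proof (cases "dinf a b = 0")
  case True
  then show ?thesis unfolding geodesic_path_def seg_def using dinf_0[of a b] by auto
next
  case False
  let ?D = "dinf a b"
  have D: "?D > 0" using False dinf_nn[of a b] by linarith
  have "dinf (seg a b s) (seg a b t) = \<bar>s - t\<bar>" for s t
  proof -
    have e1: "\<bar>fst (seg a b s) - fst (seg a b t)\<bar> = \<bar>s - t\<bar> / ?D * \<bar>fst b - fst a\<bar>"
      proof -
      have "fst (seg a b s) - fst (seg a b t) = (s - t) / ?D * (fst b - fst a)"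
        using False by (simp add: seg_def field_simps)
      then show ?thesis using D by (simp add: abs_mult)
    qed
    have e2: "\<bar>snd (seg a b s) - snd (seg a b t)\<bar> = \<bar>s - t\<bar> / ?D * \<bar>snd b - snd a\<bar>"
      proof -
      have "snd (seg a b s) - snd (seg a b t) = (s - t) / ?D * (snd b - snd a)"
        using False by (simp add: seg_def field_simps)
      then show ?thesis using D by (simp add: abs_mult)
    qed
    have "dinf (seg a b s) (seg a b t) = \<bar>s - t\<bar> / ?D * max \<bar>fst b - fst a\<bar> \<bar>snd b - snd a\<bar>"
      unfolding dinf_def[of "seg a b s"] e1 e2
      using D by (simp add: max_mult_distrib_left)
    also have "max \<bar>fst b - fst a\<bar> \<bar>snd b - snd a\<bar> = ?D"
      unfolding dinf_def by (simp add: abs_minus_commute)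
    finally show ?thesis using D by simp
  qed
  moreover have "seg a b 0 = a" using False by (simp add: seg_def)
  moreover have "seg a b ?D = b" using False by (simp add: seg_def)
  ultimately show ?thesis unfolding geodesic_path_def by auto
qed

lemma geodesic_dinf: "geodesic_space UNIV dinf"
  unfolding geodesic_space_def using metric_dinf seg_geo by blast



lemma ma_facts:
  assumes "median_algebra P m"
  shows ma_cl: "\<And>a b c. a\<in>P \<Longrightarrow> b\<in>P \<Longrightarrow> c\<in>P \<Longrightarrow> m a b c \<in> P"
    and ma_aab: "\<And>a b. a\<in>P \<Longrightarrow> b\<in>P \<Longrightarrow> m a a b = a"
    and ma_s1: "\<And>a b c. a\<in>P \<Longrightarrow> b\<in>P \<Longrightarrow> c\<in>P \<Longrightarrow> m a b c = m b a c"
    and ma_s2: "\<And>a b c. a\<in>P \<Longrightarrow> b\<in>P \<Longrightarrow> c\<in>P \<Longrightarrow> m a b c = m a c b"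
    and ma_as: "\<And>a b c e. a\<in>P \<Longrightarrow> b\<in>P \<Longrightarrow> c\<in>P \<Longrightarrow> e\<in>P \<Longrightarrow> m (m a b c) b e = m a b (m c b e)"
  using assms unfolding median_algebra_def by blast+

lemma ma_aba: assumes "median_algebra P m" "a\<in>P" "b\<in>P" shows "m a b a = a"
  using ma_s2[OF assms(1) assms(2) assms(3) assms(2)] ma_aab[OF assms] by simp

lemma ma_baa: assumes "median_algebra P m" "a\<in>P" "b\<in>P" shows "m b a a = a"
  using ma_s1[OF assms(1) assms(3) assms(2) assms(2)] ma_aba[OF assms] by simp

lemma ma_I2: assumes "median_algebra P m" "x\<in>P" "y\<in>P" "z\<in>P" shows "m (m x y z) y z = m x y z"
  using ma_as[OF assms(1) assms(2) assms(3) assms(4) assms(4)] ma_aba[OF assms(1) assms(4) assms(3)] by simp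

lemma ma_perm:
  assumes ma: "median_algebra P m" and P: "x\<in>P" "y\<in>P" "t\<in>P"
  shows "m y x t = m x y t" "m x t y = m x y t" "m y t x = m x y t" "m t x y = m x y t" "m t y x = m x y t"
proof -
  have 1: "m x y t = m y x t" using ma_s1[OF ma P] .
  have 2: "m x y t = m x t y" using ma_s2[OF ma P] .
  have 3: "m y x t = m y t x" using ma_s2[OF ma P(2) P(1) P(3)] .
  have 4: "m x t y = m t x y" using ma_s1[OF ma P(1) P(3) P(2)] .
  have 5: "m y t x = m t y x" using ma_s1[OF ma P(2) P(3) P(1)] .
  show "m y x t = m x y t" "m x t y = m x y t" "m y t x = m x y t" "m t x y = m x y t" "m t y x = m x y t"
    using 1 2 3 4 5 by simp_all
qed

lemma rank1_lin:
  assumes ma: "median_algebra P m" and rk: "median_rank_le P m n" and n: "n \<le> 1"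
    and P: "a\<in>P" "c\<in>P" "u\<in>P" "v\<in>P" and hu: "m a u c = u" and hv: "m a v c = v"
  shows "m a u v = u \<or> m a u v = v"
proof (rule ccontr)
  assume H: "\<not> (m a u v = u \<or> m a u v = v)"
  define w where "w = m a u v"
  define z where "z = m c u v"
  have wP: "w \<in> P" and zP: "z \<in> P" using ma_cl[OF ma] P unfolding w_def z_def by auto
  have wu: "w \<noteq> u" and wv: "w \<noteq> v" using H w_def by auto
  have S1: "m w u v = w" unfolding w_def using ma_I2[OF ma] P by simp
  have S2: "m z u v = z" unfolding z_def using ma_I2[OF ma] P by simp
  have vuz: "m v u z = z"
    using S2 ma_perm(5)[OF ma zP P(3) P(4)] by simp
  have S3: "m w u z = u"
  proof -
    have "m w u z = m a u (m v u z)" unfolding w_def using ma_as[OF ma] P zP by simp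
    also have "\<dots> = m a u z" using vuz by simp
    also have "\<dots> = m (m a u c) u v" unfolding z_def using ma_as[OF ma] P by simp
    also have "\<dots> = u" using hu ma_aab[OF ma] P by simp
    finally show ?thesis .
  qed
  have w': "w = m a v u" unfolding w_def using ma_s2[OF ma] P by simp
  have z': "z = m c v u" unfolding z_def using ma_s2[OF ma] P by simp
  have uvz: "m u v z = z"
    using S2 ma_perm(3)[OF ma zP P(3) P(4)] by simp
  have S4: "m w v z = v"
  proof -
    have "m w v z = m a v (m u v z)" unfolding w' using ma_as[OF ma] P zP by simp
    also have "\<dots> = m a v z" using uvz by simp
    also have "\<dots> = m (m a v c) v u" unfolding z' using ma_as[OF ma] P by simp
    also have "\<dots> = v" using hv ma_aab[OF ma] P by simp
    finally show ?thesis .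
  qed
  have uv: "u \<noteq> v" using H ma_baa[OF ma P(3) P(1)] by auto
  have zw: "z \<noteq> w" using S3 wu ma_aba[OF ma wP P(3)] by auto
  have zu: "z \<noteq> u"
  proof
    assume "z = u"
    then have "v = m w v u" using S4 by simp
    also have "\<dots> = m w u v" using ma_s2[OF ma] wP P by simp
    finally show False using S1 wv by simp
  qed
  have zv: "z \<noteq> v" using S3 S1 wu by auto
  define fb where "fb b0 b1 = (if b0 then (if b1 then z else u) else (if b1 then v else w))" for b0 b1
  define f where "f x = fb (x (0::nat)) (x 1)" for x :: "nat \<Rightarrow> bool"
  have Pall: "fb b0 b1 \<in> P" for b0 b1 using wP zP P unfolding fb_def by auto
  have hom: "fb (b0 \<and> c0 \<or> c0 \<and> e0 \<or> b0 \<and> e0) (b1 \<and> c1 \<or> c1 \<and> e1 \<or> b1 \<and> e1)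
      = m (fb b0 b1) (fb c0 c1) (fb e0 e1)" for b0 b1 c0 c1 e0 e1
  proof -
    note facts = S1 S2 S3 S4 ma_perm[OF ma wP P(3) P(4)] ma_perm[OF ma zP P(3) P(4)]
      ma_perm[OF ma wP P(3) zP] ma_perm[OF ma wP P(4) zP]
      ma_aab[OF ma] ma_aba[OF ma] ma_baa[OF ma] wP zP P
    show ?thesis
      by (cases b0; cases b1; cases c0; cases c1; cases e0; cases e1; simp add: fb_def facts)
  qed
  have cube2: "x \<in> cube 2 \<Longrightarrow> i \<ge> 2 \<Longrightarrow> x i = False" for x i unfolding cube_def by auto
  have "contains_cube P m 2"
    unfolding contains_cube_def
  proof (intro exI conjI ballI)
    show "inj_on f (cube 2)"
    proof (rule inj_onI)
      fix x y assume xy: "x \<in> cube 2" "y \<in> cube 2" "f x = f y"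
      have "x 0 = y 0 \<and> x 1 = y 1"
        using xy(3) wu wv uv zw zu zv unfolding f_def fb_def
        by (cases "x 0"; cases "x 1"; cases "y 0"; cases "y 1"; simp)
      then show "x = y"
      proof (intro ext)
        fix i show "x i = y i" using cube2[OF xy(1)] cube2[OF xy(2)] \<open>x 0 = y 0 \<and> x 1 = y 1\<close>
          by (cases "i = 0"; cases "i = 1"; auto)
      qed
    qed
    show "f ` cube 2 \<subseteq> P" using Pall unfolding f_def by auto
    fix x y t assume "x \<in> cube 2" "y \<in> cube 2" "t \<in> cube 2"
    show "f (majority x y t) = m (f x) (f y) (f t)"
      unfolding f_def majority_def using hom by simp
  qed
  then show False using rk n unfolding median_rank_le_def by fastforce
qed



lemma hom_chain:
  fixes h :: "(nat \<Rightarrow> bool) \<Rightarrow> real"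
  assumes hom: "\<forall>x\<in>cube k. \<forall>y\<in>cube k. \<forall>t\<in>cube k. h (majority x y t) = med (h x) (h y) (h t)"
    and x: "x \<in> cube k"
  shows "h x = h (\<lambda>_. False) \<or> h x = h (\<lambda>i. i < k)"
proof -
  let ?O = "\<lambda>_::nat. False" and ?I = "\<lambda>i. i < k" and ?c = "\<lambda>i. i < k \<and> \<not> x i"
  have cO: "?O \<in> cube k" and cI: "?I \<in> cube k" and cc: "?c \<in> cube k" unfolding cube_def by auto
  have xk: "\<And>i. k \<le> i \<Longrightarrow> x i = False" using x unfolding cube_def by auto
  have m1: "majority ?O x ?I = x" unfolding majority_def using xk by (auto intro!: ext) (meson not_le)
  have m2: "majority ?O ?c ?I = ?c" unfolding majority_def by (auto intro!: ext)
  have m3: "majority x ?c ?O = ?O" unfolding majority_def by (auto intro!: ext)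
  have m4: "majority x ?c ?I = ?I" unfolding majority_def using xk by (auto intro!: ext)
  have "h x = med (h ?O) (h x) (h ?I)" using bspec[OF bspec[OF bspec[OF hom cO] x] cI] m1 by simp
  moreover have "h ?c = med (h ?O) (h ?c) (h ?I)" using bspec[OF bspec[OF bspec[OF hom cO] cc] cI] m2 by simp
  moreover have "h ?O = med (h x) (h ?c) (h ?O)" using bspec[OF bspec[OF bspec[OF hom x] cc] cO] m3 by simp
  moreover have "h ?I = med (h x) (h ?c) (h ?I)" using bspec[OF bspec[OF bspec[OF hom x] cc] cI] m4 by simp
  ultimately show ?thesis by (rule med_two)
qed

lemma no_cube:
  fixes q :: "(nat \<Rightarrow> bool) \<Rightarrow> real \<times> real"
  assumes k: "3 \<le> k" and inj: "inj_on q (cube k)"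
    and hom: "\<forall>x\<in>cube k. \<forall>y\<in>cube k. \<forall>t\<in>cube k. q (majority x y t) = mu (q x) (q y) (q t)"
  shows False
proof -
  let ?O = "\<lambda>_::nat. False" and ?I = "\<lambda>i. i < k"
  have h1: "\<forall>x\<in>cube k. \<forall>y\<in>cube k. \<forall>t\<in>cube k. (fst \<circ> q) (majority x y t) = med ((fst \<circ> q) x) ((fst \<circ> q) y) ((fst \<circ> q) t)"
    using hom by (simp add: mu_def)
  have h2: "\<forall>x\<in>cube k. \<forall>y\<in>cube k. \<forall>t\<in>cube k. (snd \<circ> q) (majority x y t) = med ((snd \<circ> q) x) ((snd \<circ> q) y) ((snd \<circ> q) t)"
    using hom by (simp add: mu_def)
  define S where "S = {fst (q ?O), fst (q ?I)} \<times> {snd (q ?O), snd (q ?I)}"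
  have sub: "q ` cube k \<subseteq> S"
  proof
    fix y assume "y \<in> q ` cube k"
    then obtain x where x: "x \<in> cube k" "y = q x" by auto
    have "fst (q x) = fst (q ?O) \<or> fst (q x) = fst (q ?I)" using hom_chain[OF h1 x(1)] by simp
    moreover have "snd (q x) = snd (q ?O) \<or> snd (q x) = snd (q ?I)" using hom_chain[OF h2 x(1)] by simp
    ultimately show "y \<in> S" unfolding S_def x(2) by (cases "q x") auto
  qed
  have cS: "card S \<le> 4" unfolding S_def card_cartesian_product
    by (rule order.trans[OF mult_le_mono[OF card_insert_le_m1 card_insert_le_m1]]) auto
  define F where "F = {?O, \<lambda>i. i = 0, \<lambda>i. i = 1, \<lambda>i. i = 2, \<lambda>i. i = 0 \<or> i = 1}"
  have Fc: "F \<subseteq> cube k" unfolding F_def cube_def using k by auto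
  have dl: "distinct [?O, \<lambda>i. i = 0, \<lambda>i. i = 1, \<lambda>i. i = 2, \<lambda>i. i = 0 \<or> i = 1]"
    by (simp add: fun_eq_iff) (intro conjI; ((rule exI[of _ 0]; simp; fail) | (rule exI[of _ 1]; simp; fail) | (rule exI[of _ 2]; simp; fail)))
  have cF: "card F = 5" unfolding F_def using distinct_card[OF dl] by simp
  have "card (q ` F) = 5" using card_image[OF inj_on_subset[OF inj Fc]] cF by simp
  moreover have "q ` F \<subseteq> S" using sub Fc by auto
  moreover have "finite S" unfolding S_def by simp
  ultimately have "5 \<le> card S" using card_mono[of S "q ` F"] by simp
  then show False using cS by simp
qed



lemma dinf_refl[simp]: "dinf p p = 0" using dinf_0 by simp

lemma mu_closed: "x \<in> S1 \<times> S2 \<Longrightarrow> y \<in> S1 \<times> S2 \<Longrightarrow> z \<in> S1 \<times> S2 \<Longrightarrow> mu x y z \<in> S1 \<times> S2"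
proof -
  assume a: "x \<in> S1 \<times> S2" "y \<in> S1 \<times> S2" "z \<in> S1 \<times> S2"
  have "med (fst x) (fst y) (fst z) \<in> S1" using med_in[of "fst x" "fst y" "fst z"] a by auto
  moreover have "med (snd x) (snd y) (snd z) \<in> S2" using med_in[of "snd x" "snd y" "snd z"] a by auto
  ultimately show ?thesis unfolding mu_def by simp
qed

lemma approx:
  assumes finA: "finite (A :: (real \<times> real) set)"
  shows "\<exists>(P :: nat set) mP \<pi> lam. finite P \<and> median_algebra P mP \<and> median_rank_le P mP 2 \<and>
      \<pi> ` A \<subseteq> P \<and> lam ` P \<subseteq> (UNIV :: (real \<times> real) set) \<and>
      (\<forall>x\<in>P. \<forall>y\<in>P. \<forall>z\<in>P. dinf (lam (mP x y z)) (mu (lam x) (lam y) (lam z)) \<le> 0) \<and>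
      (\<forall>a\<in>A. dinf (lam (\<pi> a)) a \<le> 0)"
proof -
  define G where "G = fst ` A \<times> snd ` A"
  have finG: "finite G" unfolding G_def using finA by simp
  have AG: "A \<subseteq> G" unfolding G_def by force
  have clG: "\<And>x y z. x \<in> G \<Longrightarrow> y \<in> G \<Longrightarrow> z \<in> G \<Longrightarrow> mu x y z \<in> G"
    unfolding G_def by (rule mu_closed)
  obtain g where bij: "bij_betw g {0..<card G} G" using ex_bij_betw_nat_finite[OF finG] by blast
  define P where "P = {0..<card G}"
  have injg: "inj_on g P" and imG: "g ` P = G" using bij unfolding bij_betw_def P_def by auto
  have gP: "x \<in> P \<Longrightarrow> g x \<in> G" for x using imG by auto
  have gi: "y \<in> G \<Longrightarrow> g (the_inv_into P g y) = y" for y using f_the_inv_into_f[OF injg] imG by simp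
  have giP: "y \<in> G \<Longrightarrow> the_inv_into P g y \<in> P" for y using the_inv_into_into[OF injg] imG by blast
  have ig: "x \<in> P \<Longrightarrow> the_inv_into P g (g x) = x" for x using the_inv_into_f_f[OF injg] by simp
  define mP where "mP x y z = the_inv_into P g (mu (g x) (g y) (g z))" for x y z
  define \<pi> where "\<pi> a = the_inv_into P g a" for a
  have hom: "x \<in> P \<Longrightarrow> y \<in> P \<Longrightarrow> z \<in> P \<Longrightarrow> g (mP x y z) = mu (g x) (g y) (g z)" for x y z
    unfolding mP_def using gi clG gP by simp
  have mPP: "x \<in> P \<Longrightarrow> y \<in> P \<Longrightarrow> z \<in> P \<Longrightarrow> mP x y z \<in> P" for x y z
    unfolding mP_def using giP clG gP by simp
  have ma: "median_algebra P mP"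
    unfolding median_algebra_def
  proof (intro conjI ballI)
    fix a b c assume "a \<in> P" "b \<in> P" "c \<in> P"
    then show "mP a b c \<in> P" by (rule mPP)
  next
    fix a b assume "a \<in> P" "b \<in> P"
    then show "mP a a b = a" unfolding mP_def by (simp add: mu_aab ig)
  next
    fix a b c assume "a \<in> P" "b \<in> P" "c \<in> P"
    then show "mP a b c = mP b a c" unfolding mP_def by (metis mu_sym1)
  next
    fix a b c assume "a \<in> P" "b \<in> P" "c \<in> P"
    then show "mP a b c = mP a c b" unfolding mP_def by (metis mu_sym2)
  next
    fix a b c e assume abce: "a \<in> P" "b \<in> P" "c \<in> P" "e \<in> P"
    have "mP (mP a b c) b e = the_inv_into P g (mu (mu (g a) (g b) (g c)) (g b) (g e))"
      unfolding mP_def[of "mP a b c"] using hom abce by simp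
    also have "\<dots> = the_inv_into P g (mu (g a) (g b) (mu (g c) (g b) (g e)))" by (simp add: mu_assoc)
    also have "\<dots> = mP a b (mP c b e)"
      unfolding mP_def[of a b "mP c b e"] using hom abce by simp
    finally show "mP (mP a b c) b e = mP a b (mP c b e)" .
  qed
  have rk: "median_rank_le P mP 2"
    unfolding median_rank_le_def
  proof (intro allI impI)
    fix k assume "contains_cube P mP k"
    then obtain f where f: "inj_on f (cube k)" "f ` cube k \<subseteq> P"
      "\<forall>x\<in>cube k. \<forall>y\<in>cube k. \<forall>z\<in>cube k. f (majority x y z) = mP (f x) (f y) (f z)"
      unfolding contains_cube_def by blast
    show "k \<le> 2"
    proof (rule ccontr)
      assume "\<not> k \<le> 2"
      then have k3: "3 \<le> k" by simp
      have inj: "inj_on (g \<circ> f) (cube k)"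
        using comp_inj_on[OF f(1) inj_on_subset[OF injg f(2)]] .
      have "\<forall>x\<in>cube k. \<forall>y\<in>cube k. \<forall>t\<in>cube k. (g \<circ> f) (majority x y t) = mu ((g \<circ> f) x) ((g \<circ> f) y) ((g \<circ> f) t)"
        using f(2,3) hom by (auto simp: image_subset_iff)
      then show False using no_cube[OF k3 inj] by blast
    qed
  qed
  show ?thesis
  proof (intro exI conjI)
    show "finite P" unfolding P_def by simp
    show "median_algebra P mP" by (rule ma)
    show "median_rank_le P mP 2" by (rule rk)
    show "\<pi> ` A \<subseteq> P" unfolding \<pi>_def using giP AG by auto
    show "g ` P \<subseteq> UNIV" by simp
    show "\<forall>x\<in>P. \<forall>y\<in>P. \<forall>z\<in>P. dinf (g (mP x y z)) (mu (g x) (g y) (g z)) \<le> 0"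
      using hom dinf_0[of "mu _ _ _" "mu _ _ _"] by simp
    show "\<forall>a\<in>A. dinf (g (\<pi> a)) a \<le> 0"
      unfolding \<pi>_def using gi AG dinf_0 by auto
  qed
qed

lemma rank_le2: "coarse_median_rank_le UNIV dinf mu 2"
  unfolding coarse_median_rank_le_def
proof (intro conjI)
  show "metric_on UNIV dinf" by (rule metric_dinf)
  show "\<forall>a\<in>UNIV. \<forall>b\<in>UNIV. mu a a b = a" by (simp add: mu_aab)
  show "\<forall>a\<in>UNIV. \<forall>b\<in>UNIV. \<forall>c\<in>UNIV. mu a b c = mu b a c \<and> mu a b c = mu a c b"
    by (metis mu_sym1 mu_sym2)
  show "\<forall>a\<in>UNIV. \<forall>b\<in>UNIV. \<forall>c\<in>UNIV. mu a b c \<in> UNIV" by simp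
  show "\<exists>K H0 :: real. \<exists>H :: nat \<Rightarrow> real.
        (\<forall>p. 0 \<le> H p) \<and>
        (\<forall>a\<in>UNIV. \<forall>b\<in>UNIV. \<forall>c\<in>UNIV. \<forall>a'\<in>UNIV. \<forall>b'\<in>UNIV. \<forall>c'\<in>UNIV.
           dinf (mu a b c) (mu a' b' c') \<le> K * (dinf a a' + dinf b b' + dinf c c') + H0) \<and>
        (\<forall>p. \<forall>A. A \<subseteq> UNIV \<and> finite A \<and> 1 \<le> card A \<and> card A \<le> p \<longrightarrow>
           (\<exists>(P :: nat set) mP \<pi> lam.
              finite P \<and> median_algebra P mP \<and> median_rank_le P mP 2 \<and>
              \<pi> ` A \<subseteq> P \<and> lam ` P \<subseteq> UNIV \<and>
              (\<forall>x\<in>P. \<forall>y\<in>P. \<forall>z\<in>P. dinf (lam (mP x y z)) (mu (lam x) (lam y) (lam z)) \<le> H p) \<and>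
              (\<forall>a\<in>A. dinf (lam (\<pi> a)) a \<le> H p)))"
    apply (rule exI[of _ 1], rule exI[of _ 0], rule exI[of _ "\<lambda>_. 0"])
    using mu_lip approx by auto
qed



lemma ma_int: assumes "median_algebra P m" "a\<in>P" "b\<in>P" "c\<in>P" shows "m a (m a b c) c = m a b c"
proof -
  have bac: "m a b c = m b a c" using ma_s1[OF assms] .
  have "m a (m a b c) c = m (m a b c) a c" using ma_s1[OF assms(1) assms(2) ma_cl[OF assms] assms(4)] .
  also have "\<dots> = m (m b a c) a c" using bac by simp
  also have "\<dots> = m b a c" using ma_I2[OF assms(1) assms(3) assms(2) assms(4)] .
  finally show ?thesis using bac by simp
qed

lemma absbound: fixes K H0 s t :: real shows "0 \<le> s \<Longrightarrow> s \<le> t \<Longrightarrow> K * s + H0 \<le> \<bar>K\<bar> * t + \<bar>H0\<bar>"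
proof -
  assume "0 \<le> s" "s \<le> t"
  then have "K * s \<le> \<bar>K\<bar> * s" using mult_right_mono[OF abs_ge_self[of K] \<open>0 \<le> s\<close>] by simp
  also have "\<dots> \<le> \<bar>K\<bar> * t" using \<open>s \<le> t\<close> by (simp add: mult_left_mono)
  finally show ?thesis by linarith
qed

lemma not_rank_le1:
  assumes k: "k \<le> 1" shows "\<not> coarse_median_rank_le UNIV dinf mu k"
proof
  assume R: "coarse_median_rank_le UNIV dinf mu k"
  note R4 = R[unfolded coarse_median_rank_le_def, THEN conjunct2, THEN conjunct2, THEN conjunct2, THEN conjunct2]
  obtain K H0 :: real and H :: "nat \<Rightarrow> real" where
    Hnn: "\<forall>p. 0 \<le> H p" and
    C1: "\<forall>a\<in>UNIV. \<forall>b\<in>UNIV. \<forall>c\<in>UNIV. \<forall>a'\<in>UNIV. \<forall>b'\<in>UNIV. \<forall>c'\<in>UNIV.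
           dinf (mu a b c) (mu a' b' c') \<le> K * (dinf a a' + dinf b b' + dinf c c') + H0" and
    C2: "\<forall>p. \<forall>A. A \<subseteq> UNIV \<and> finite A \<and> 1 \<le> card A \<and> card A \<le> p \<longrightarrow>
           (\<exists>(P :: nat set) mP \<pi> lam.
              finite P \<and> median_algebra P mP \<and> median_rank_le P mP k \<and>
              \<pi> ` A \<subseteq> P \<and> lam ` P \<subseteq> UNIV \<and>
              (\<forall>x\<in>P. \<forall>y\<in>P. \<forall>z\<in>P. dinf (lam (mP x y z)) (mu (lam x) (lam y) (lam z)) \<le> H p) \<and>
              (\<forall>a\<in>A. dinf (lam (\<pi> a)) a \<le> H p))"
    using R4 by (elim exE conjE) blast
  define h where "h = H 4"
  have h0: "0 \<le> h" using Hnn h_def by simp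
  define E where "E = h + \<bar>K\<bar> * (h + h + h) + \<bar>H0\<bar>"
  define F where "F = h + \<bar>K\<bar> * (h + E + E) + \<bar>H0\<bar>"
  have E0: "0 \<le> E" unfolding E_def using h0 by simp
  have F0: "0 \<le> F" unfolding F_def using h0 E0 by simp
  define L where "L = F + E + 1"
  have L0: "0 < L" unfolding L_def using E0 F0 by simp
  define pa :: "real \<times> real" where "pa = (0, 0)"
  define pb :: "real \<times> real" where "pb = (L, 0)"
  define pc :: "real \<times> real" where "pc = (L, L)"
  define pe :: "real \<times> real" where "pe = (0, L)"
  have cA: "card {pa, pb, pc, pe} = 4" using L0 unfolding pa_def pb_def pc_def pe_def by (simp add: card_insert_if)
  have prem: "{pa, pb, pc, pe} \<subseteq> UNIV \<and> finite {pa, pb, pc, pe} \<and> 1 \<le> card {pa, pb, pc, pe} \<and> card {pa, pb, pc, pe} \<le> 4"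
    using cA by simp
  obtain P mP \<pi> lam where X: "finite (P :: nat set) \<and> median_algebra P mP \<and> median_rank_le P mP k \<and>
              \<pi> ` {pa, pb, pc, pe} \<subseteq> P \<and> lam ` P \<subseteq> UNIV \<and>
              (\<forall>x\<in>P. \<forall>y\<in>P. \<forall>z\<in>P. dinf (lam (mP x y z)) (mu (lam x) (lam y) (lam z)) \<le> H 4) \<and>
              (\<forall>a\<in>{pa, pb, pc, pe}. dinf (lam (\<pi> a)) a \<le> H 4)"
    using C2[rule_format, OF prem] by blast
  note ma = X[THEN conjunct2, THEN conjunct1]
  note rk = X[THEN conjunct2, THEN conjunct2, THEN conjunct1]
  note piA = X[THEN conjunct2, THEN conjunct2, THEN conjunct2, THEN conjunct1]
  note hm = X[THEN conjunct2, THEN conjunct2, THEN conjunct2, THEN conjunct2, THEN conjunct2, THEN conjunct1]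
  note ap = X[THEN conjunct2, THEN conjunct2, THEN conjunct2, THEN conjunct2, THEN conjunct2, THEN conjunct2]
  note hm = hm[folded h_def] and ap = ap[folded h_def]
  define a' where "a' = \<pi> pa"
  define b' where "b' = \<pi> pb"
  define c' where "c' = \<pi> pc"
  define e' where "e' = \<pi> pe"
  have P: "a' \<in> P" "b' \<in> P" "c' \<in> P" "e' \<in> P" using piA unfolding a'_def b'_def c'_def e'_def by auto
  have da: "dinf (lam a') pa \<le> h" and db: "dinf (lam b') pb \<le> h"
    and dc: "dinf (lam c') pc \<le> h" and de: "dinf (lam e') pe \<le> h"
    using ap unfolding a'_def b'_def c'_def e'_def by auto
  define u where "u = mP a' b' c'"
  define v where "v = mP a' e' c'"
  have uP: "u \<in> P" and vP: "v \<in> P" unfolding u_def v_def using ma_cl[OF ma] P by auto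
  have mu1: "mu pa pb pc = pb" and mu2: "mu pa pe pc = pe" and mu3: "mu pa pb pe = pa"
    unfolding pa_def pb_def pc_def pe_def mu_def med_def using L0 by (simp_all add: min_def max_def)
  have C1': "dinf (mu x y z) (mu x' y' z') \<le> \<bar>K\<bar> * t + \<bar>H0\<bar>"
    if "dinf x x' + dinf y y' + dinf z z' \<le> t" for x y z x' y' z' t
  proof -
    have "dinf (mu x y z) (mu x' y' z') \<le> K * (dinf x x' + dinf y y' + dinf z z') + H0"
      using C1 by blast
    also have "\<dots> \<le> \<bar>K\<bar> * t + \<bar>H0\<bar>"
      by (rule absbound) (use that dinf_nn in \<open>auto intro: add_nonneg_nonneg\<close>)
    finally show ?thesis .
  qed
  have du: "dinf (lam u) pb \<le> E"
  proof -
    have "dinf (lam u) (mu (lam a') (lam b') (lam c')) \<le> h" using hm P unfolding u_def by simp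
    moreover have "dinf (mu (lam a') (lam b') (lam c')) (mu pa pb pc) \<le> \<bar>K\<bar> * (h + h + h) + \<bar>H0\<bar>"
      by (rule C1') (use da db dc in simp)
    ultimately show ?thesis using dinf_tri[of "lam u" pb "mu (lam a') (lam b') (lam c')"] mu1
      unfolding E_def by simp
  qed
  have dv: "dinf (lam v) pe \<le> E"
  proof -
    have "dinf (lam v) (mu (lam a') (lam e') (lam c')) \<le> h" using hm P unfolding v_def by simp
    moreover have "dinf (mu (lam a') (lam e') (lam c')) (mu pa pe pc) \<le> \<bar>K\<bar> * (h + h + h) + \<bar>H0\<bar>"
      by (rule C1') (use da de dc in simp)
    ultimately show ?thesis using dinf_tri[of "lam v" pe "mu (lam a') (lam e') (lam c')"] mu2
      unfolding E_def by simp
  qed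
  have dw: "dinf (lam (mP a' u v)) pa \<le> F"
  proof -
    have "dinf (lam (mP a' u v)) (mu (lam a') (lam u) (lam v)) \<le> h" using hm P uP vP by simp
    moreover have "dinf (mu (lam a') (lam u) (lam v)) (mu pa pb pe) \<le> \<bar>K\<bar> * (h + E + E) + \<bar>H0\<bar>"
      by (rule C1') (use da du dv in simp)
    ultimately show ?thesis using dinf_tri[of "lam (mP a' u v)" pa "mu (lam a') (lam u) (lam v)"] mu3
      unfolding F_def by simp
  qed
  have hu: "mP a' u c' = u" unfolding u_def by (rule ma_int[OF ma P(1) P(2) P(3)])
  have hv: "mP a' v c' = v" unfolding v_def by (rule ma_int[OF ma P(1) P(4) P(3)])
  have dab: "dinf pa pb = L" and dae: "dinf pa pe = L"
    unfolding pa_def pb_def pe_def dinf_def using L0 by auto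
  from rank1_lin[OF ma rk k P(1) P(3) uP vP hu hv]
  show False
  proof
    assume "mP a' u v = u"
    then have "dinf (lam u) pa \<le> F" using dw by simp
    then have "dinf pa pb \<le> F + E" using dinf_tri[of pa pb "lam u"] du dinf_sym[of pa "lam u"] by simp
    then show False using dab L_def by simp
  next
    assume "mP a' u v = v"
    then have "dinf (lam v) pa \<le> F" using dw by simp
    then have "dinf pa pe \<le> F + E" using dinf_tri[of pa pe "lam v"] dv dinf_sym[of pa "lam v"] by simp
    then show False using dae L_def by simp
  qed
qed



lemma geo_diag:
  assumes L: "0 < L" and g: "geodesic_path UNIV dinf \<gamma> (0, 0) (L, L)" and t: "t \<in> {0..L}"
  shows "\<gamma> t = (t, t)"
proof -
  have dab: "dinf (0, 0) (L, L) = L" unfolding dinf_def using L by simp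
  have g0: "\<gamma> 0 = (0, 0)" and gL: "\<gamma> L = (L, L)"
    and iso: "\<forall>s\<in>{0..L}. \<forall>t\<in>{0..L}. dinf (\<gamma> s) (\<gamma> t) = \<bar>s - t\<bar>"
    using g unfolding geodesic_path_def dab by auto
  have 0: "0 \<in> {0..L}" and LL: "L \<in> {0..L}" using L by auto
  have d1: "dinf (\<gamma> 0) (\<gamma> t) = t" using iso 0 t by auto
  have d2: "dinf (\<gamma> t) (\<gamma> L) = L - t" using iso LL t by auto
  obtain x y where xy: "\<gamma> t = (x, y)" by (cases "\<gamma> t")
  have "max \<bar>0 - x\<bar> \<bar>0 - y\<bar> = t" using d1 g0 xy unfolding dinf_def by simp
  moreover have "max \<bar>x - L\<bar> \<bar>y - L\<bar> = L - t" using d2 gL xy unfolding dinf_def by simp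
  ultimately have "x = t" "y = t" by (smt (verit) max.cobounded1 max.cobounded2)+
  then show ?thesis using xy by simp
qed

lemma far:
  assumes C: "0 \<le> C"
  shows "\<exists>a\<in>(UNIV :: (real \<times> real) set). \<exists>b\<in>UNIV. \<forall>\<gamma>. geodesic_path UNIV dinf \<gamma> a b \<longrightarrow>
        \<not> hausdorff_le dinf (\<gamma> ` {0..dinf a b}) (median_interval UNIV mu a b) C"
proof (intro bexI allI impI)
  define L where "L = 2 * C + 2"
  have L: "0 < L" unfolding L_def using C by simp
  have dab: "dinf (0, 0) (L, L) = L" unfolding dinf_def using L by simp
  fix \<gamma> assume g: "geodesic_path UNIV dinf \<gamma> (0, 0) (L, L)"
  show "\<not> hausdorff_le dinf (\<gamma> ` {0..dinf (0, 0) (L, L)}) (median_interval UNIV mu (0, 0) (L, L)) C"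
  proof
    assume "hausdorff_le dinf (\<gamma> ` {0..dinf (0, 0) (L, L)}) (median_interval UNIV mu (0, 0) (L, L)) C"
    then have H: "\<forall>t\<in>median_interval UNIV mu (0, 0) (L, L). \<forall>\<epsilon>>0. \<exists>s\<in>\<gamma> ` {0..L}. dinf s t < C + \<epsilon>"
      unfolding hausdorff_le_def dab by blast
    have "mu (0, 0) (L, 0) (L, L) = (L, 0)" unfolding mu_def med_def using L by (simp add: min_def max_def)
    then have mem: "(L, 0) \<in> median_interval UNIV mu (0, 0) (L, L)" unfolding median_interval_def by (metis (mono_tags, lifting) UNIV_I mem_Collect_eq)
    have "\<exists>s\<in>\<gamma> ` {0..L}. dinf s (L, 0) < C + 1" using H[rule_format, OF mem, of 1] by simp
    then obtain s where s: "s \<in> \<gamma> ` {0..L}" "dinf s (L, 0) < C + 1" by blast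
    then obtain t where t: "t \<in> {0..L}" "s = (t, t)" using geo_diag[OF L g] by auto
    have "dinf s (L, 0) = max \<bar>t - L\<bar> \<bar>t\<bar>" unfolding t(2) dinf_def by simp
    moreover have "max \<bar>t - L\<bar> \<bar>t\<bar> \<ge> C + 1" unfolding L_def by (smt (verit) max.cobounded1 max.cobounded2)
    ultimately show False using s(2) by simp
  qed
qed simp_all

theorem theorem5p1:
  shows "\<exists>(X :: (real \<times> real) set) d \<mu>.
     geodesic_space X d \<and> coarse_median_rank_eq X d \<mu> 2 \<and>
     (\<forall>C\<ge>0. \<exists>a\<in>X. \<exists>b\<in>X. \<forall>\<gamma>. geodesic_path X d \<gamma> a b \<longrightarrow>
        \<not> hausdorff_le d (\<gamma> ` {0..d a b}) (median_interval X \<mu> a b) C)"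
proof (intro exI conjI allI impI)
  show "geodesic_space UNIV dinf" by (rule geodesic_dinf)
  show "coarse_median_rank_eq UNIV dinf mu 2"
    unfolding coarse_median_rank_eq_def using rank_le2 not_rank_le1 by simp
  fix C :: real assume "0 \<le> C"
  then show "\<exists>a\<in>UNIV. \<exists>b\<in>UNIV. \<forall>\<gamma>. geodesic_path UNIV dinf \<gamma> a b \<longrightarrow>
        \<not> hausdorff_le dinf (\<gamma> ` {0..dinf a b}) (median_interval UNIV mu a b) C" by (rule far)
qed

end
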